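(* In the contention game with $k=2$ channels under acknowledgement-based feedback and $n\ge2$ players, let all players other than $i$ use $f^2$, and let player $i$ use any protocol $g_i\in\mathcal G^{f^2}$. Then the expected latency of player $i$ under the profile $(f^2_{-i},g_i)$ is $2^n/n$.
   Context: Contention game: $n$ players, channels $K=\{1,\dots,k\}$, slots $t=1,2,\dots$; each player has one packet, initially pending; in each slot a pending player chooses (possibly randomly) an action in $\{0,1,\dots,k\}$ ($0$ = idle, $a$ = transmit on channel $a$); a lone transmitter on a channel succeeds and leaves, colliding transmitters remain pending. Latency = slot of successful transmission. Acknowledgement-based: decision rules depend only on the personal action history. $f^2$ is the protocol that in every slot, regardless of history, transmits on each of the two channels with probability $1/2$ and never idles. For $\tau^*\ge1$ and a personal history $h_{i,\tau^*}=(a_{i,1},\dots,a_{i,\tau^*})$, $g_i(h_{i,\tau^*})$ is the protocol playing $a_{i,t}$ with probability $1$ for $1\le t\le\tau^*$ and following $f^2$ for $t>\tau^*$. $\mathcal G^{f^2}$ is the set of all such $g_i(h_{i,\tau^*})$, over all $\tau^*\ge1$, for which $h_{i,\tau^*}$ occurs with positive probability when all players use $f^2$ (i.e., $a_{i,t}\neq0$ for all $t\le\tau^*$). *)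

theory Defs
  imports "HOL-Probability.Probability"
begin

text \<open>Players are 0,...,n-1. An action is a natural number: 0 = idle, a >= 1 = transmit on channel a.
  A protocol maps the personal action history (list of own past actions, oldest first)
  to a distribution over the next action.
  A game state maps each player j to (pending j, personal history of j).\<close>

type_synonym protocol = "nat list \<Rightarrow> nat pmf"
type_synonym gstate = "nat \<Rightarrow> bool \<times> nat list"

definition init_state :: "nat \<Rightarrow> gstate" where
  "init_state n = (\<lambda>j. (j < n, []))"

definition succeeds :: "nat \<Rightarrow> gstate \<Rightarrow> (nat \<Rightarrow> nat) \<Rightarrow> nat \<Rightarrow> bool" where
  "succeeds n s a j \<longleftrightarrow> a j \<noteq> 0 \<and> (\<forall>j'<n. j' \<noteq> j \<longrightarrow> fst (s j') \<longrightarrow> a j' \<noteq> a j)"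

definition step :: "nat \<Rightarrow> (nat \<Rightarrow> protocol) \<Rightarrow> gstate \<Rightarrow> gstate pmf" where
  "step n P s =
     map_pmf
       (\<lambda>a. \<lambda>j. if j < n \<and> fst (s j)
                 then (\<not> succeeds n s a j, snd (s j) @ [a j])
                 else s j)
       (Pi_pmf {..<n} 0 (\<lambda>j. if fst (s j) then P j (snd (s j)) else return_pmf 0))"

primrec state_dist :: "nat \<Rightarrow> (nat \<Rightarrow> protocol) \<Rightarrow> nat \<Rightarrow> gstate pmf" where
  "state_dist n P 0 = return_pmf (init_state n)"
| "state_dist n P (Suc t) = state_dist n P t \<bind> step n P"

text \<open>Probability that the latency of player i equals t, i.e. that i transmits
  successfully in slot t (slots are numbered 1,2,...).\<close>
definition latency_prob :: "nat \<Rightarrow> (nat \<Rightarrow> protocol) \<Rightarrow> nat \<Rightarrow> nat \<Rightarrow> real" where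
  "latency_prob n P i t =
     (if t = 0 then 0 else
      measure_pmf.prob
        (state_dist n P (t - 1) \<bind> (\<lambda>s. map_pmf (\<lambda>s'. (s, s')) (step n P s)))
        {(s, s'). fst (s i) \<and> \<not> fst (s' i)})"

text \<open>Expected latency of player i (in [0,\<infinity>]); it is \<infinity> if with positive probability
  player i never succeeds.\<close>
definition expected_latency :: "nat \<Rightarrow> (nat \<Rightarrow> protocol) \<Rightarrow> nat \<Rightarrow> ennreal" where
  "expected_latency n P i =
     (\<Sum>t. of_nat t * ennreal (latency_prob n P i t))
     + (if (\<Sum>t. ennreal (latency_prob n P i t)) < 1 then \<infinity> else 0)"

definition f2 :: protocol where
  "f2 = (\<lambda>h. pmf_of_set {1, 2})"

definition g_of :: "nat list \<Rightarrow> protocol" where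
  "g_of hs = (\<lambda>h. if length h < length hs then return_pmf (hs ! length h) else f2 h)"

text \<open>The class G^{f^2}: tau* >= 1 and the history has positive probability under f^2,
  i.e. every prescribed action is nonzero (it is a channel in {1,2}).\<close>
definition G_f2 :: "protocol set" where
  "G_f2 = {g_of hs | hs. hs \<noteq> [] \<and> set hs \<subseteq> {1, 2}}"

end

theory Submission
  imports Defs
begin

lemma measure_pmf_cong_supp:
  assumes "\<And>x. x \<in> set_pmf p \<Longrightarrow> x \<in> A \<longleftrightarrow> x \<in> B"
  shows "measure_pmf.prob p A = measure_pmf.prob p B"
  by (rule measure_prob_cong_0) (use assms in \<open>auto simp: pmf_eq_0_set_pmf\<close>)

definition acts :: "nat \<Rightarrow> (nat \<Rightarrow> protocol) \<Rightarrow> gstate \<Rightarrow> (nat \<Rightarrow> nat) pmf" where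
  "acts n P s = Pi_pmf {..<n} 0 (\<lambda>j. if fst (s j) then P j (snd (s j)) else return_pmf 0)"

definition upd :: "nat \<Rightarrow> gstate \<Rightarrow> (nat \<Rightarrow> nat) \<Rightarrow> gstate" where
  "upd n s a = (\<lambda>j. if j < n \<and> fst (s j) then (\<not> succeeds n s a j, snd (s j) @ [a j]) else s j)"

lemma step_eq: "step n P s = map_pmf (upd n s) (acts n P s)"
  unfolding step_def acts_def upd_def ..

definition pendset :: "nat \<Rightarrow> gstate \<Rightarrow> nat set" where
  "pendset n s = {j. j < n \<and> fst (s j)}"

lemma finite_pendset[simp]: "finite (pendset n s)"
  unfolding pendset_def by auto

definition W :: "nat \<Rightarrow> real" where "W m = (if m = 1 then 1 else 2^m / real m)"

definition V :: "nat \<Rightarrow> nat \<Rightarrow> gstate \<Rightarrow> real" where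
  "V n i s = (if fst (s i) then W (card (pendset n s)) else 0)"

lemma alg: "x > 0 \<Longrightarrow> (M::real) > 1 \<Longrightarrow> 2*x/M*(1-1/x) - (2*x/M - x/(M-1)) * ((M-1)/x) = 2*x/M - 1"
  by (simp add: field_simps)

lemma expectation_cong_supp:
  fixes f g :: "'a \<Rightarrow> real"
  assumes "\<And>x. x \<in> set_pmf M \<Longrightarrow> f x = g x"
  shows "measure_pmf.expectation M f = measure_pmf.expectation M g"
  by (rule integral_cong_AE) (use assms in \<open>auto simp: AE_measure_pmf_iff\<close>)

lemma expectation_ind:
  "measure_pmf.expectation M (\<lambda>x. if Q x then 1 else 0 :: real) = measure_pmf.prob M {x. Q x}"
proof -
  have "(\<lambda>x. if Q x then 1 else 0 :: real) = indicator {x. Q x}"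
    by (auto simp: indicator_def)
  then show ?thesis by simp
qed

lemma integrable_ind: "integrable (measure_pmf M) (\<lambda>x. if Q x then 1 else 0 :: real)"
  by (rule measure_pmf.integrable_const_bound[where B=1]) auto

lemma fst_upd: "fst (upd n s a j) = (if j < n \<and> fst (s j) then \<not> succeeds n s a j else fst (s j))"
  by (simp add: upd_def)

lemma pendset_upd: "pendset n (upd n s a) = {j \<in> pendset n s. \<not> succeeds n s a j}"
  by (auto simp: pendset_def fst_upd)


lemma expectation_bind_pmf_bounded:
  fixes f :: "'b \<Rightarrow> real"
  assumes "\<And>x. \<bar>f x\<bar> \<le> B"
  shows "measure_pmf.expectation (bind_pmf M N) f =
         measure_pmf.expectation M (\<lambda>x. measure_pmf.expectation (N x) f)"
  unfolding measure_pmf_bind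
  apply (rule integral_bind[where K="count_space UNIV" and B=B and B'=1])
  using assms measurable_measure_pmf[of N]
  by (auto simp: measure_pmf.emeasure_space_1 intro: prob_space_imp_subprob_space)

lemma step_supp: "s' \<in> set_pmf (step n P s) \<Longrightarrow> fst (s' j) \<Longrightarrow> fst (s j)"
  by (auto simp: step_eq fst_upd split: if_splits)

lemma W_nonneg: "W m \<ge> 0" by (simp add: W_def)

lemma W_le: "m \<le> n \<Longrightarrow> W m \<le> 2 ^ n"
proof -
  assume mn: "m \<le> n"
  have "W m \<le> 2 ^ m"
  proof (cases "m = 0 \<or> m = 1")
    case False
    then have "real m \<ge> 1" by auto
    then have "(2::real) ^ m / real m \<le> 2 ^ m" by (simp add: divide_le_eq)
    with False show ?thesis by (simp add: W_def)
  qed (auto simp: W_def)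
  also have "(2::real) ^ m \<le> 2 ^ n" using mn by (rule power_increasing) simp
  finally show ?thesis .
qed

lemma card_pendset_le: "card (pendset n s) \<le> n"
proof -
  have "pendset n s \<subseteq> {..<n}" by (auto simp: pendset_def)
  then show ?thesis using card_mono[of "{..<n}" "pendset n s"] by simp
qed

lemma V_bounds: "0 \<le> V n i s" "V n i s \<le> 2 ^ n * (if fst (s i) then 1 else 0)"
  using W_nonneg W_le[OF card_pendset_le] by (auto simp: V_def)

lemma V_abs: "\<bar>V n i s\<bar> \<le> 2 ^ n"
  using V_bounds[of n i s] by (auto split: if_splits)

context
  fixes n i :: nat and P :: "nat \<Rightarrow> protocol"
  assumes sup: "\<And>j h. set_pmf (P j h) \<subseteq> {1,2}"
  and unif: "\<And>j h. j \<noteq> i \<Longrightarrow> P j h = pmf_of_set {1,2}"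
  and i_lt: "i < n"
begin

lemma acts_supp:
  assumes "a \<in> set_pmf (acts n P s)"
  shows "\<And>j. j < n \<Longrightarrow> a j \<in> set_pmf (if fst (s j) then P j (snd (s j)) else return_pmf 0)"
    and "\<And>j. \<not> j < n \<Longrightarrow> a j = 0"
proof -
  have "a \<in> PiE_dflt {..<n} 0 (set_pmf \<circ> (\<lambda>j. if fst (s j) then P j (snd (s j)) else return_pmf 0))"
    using assms unfolding acts_def by (subst set_Pi_pmf[symmetric]) simp_all
  then have *: "\<forall>x. (x \<in> {..<n} \<longrightarrow> a x \<in> set_pmf (if fst (s x) then P x (snd (s x)) else return_pmf 0)) \<and> (x \<notin> {..<n} \<longrightarrow> a x = 0)"
    unfolding PiE_dflt_def o_def by (rule CollectD)
  show "\<And>j. j < n \<Longrightarrow> a j \<in> set_pmf (if fst (s j) then P j (snd (s j)) else return_pmf 0)"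
    using * by blast
  show "\<And>j. \<not> j < n \<Longrightarrow> a j = 0"
    using * by blast
qed

lemma acts_supp1:
  assumes "a \<in> set_pmf (acts n P s)" "j < n" "fst (s j)"
  shows "a j \<in> {1,2}"
proof -
  have "a j \<in> set_pmf (P j (snd (s j)))"
    using acts_supp(1)[OF assms(1,2)] assms(3) by simp
  then show ?thesis using sup[of j "snd (s j)"] by blast
qed

lemma acts_supp0:
  assumes "a \<in> set_pmf (acts n P s)" "\<not> (j < n \<and> fst (s j))"
  shows "a j = 0"
proof (cases "j < n")
  case True
  then show ?thesis using acts_supp(1)[OF assms(1) True] assms(2) by simp
qed (use acts_supp(2)[OF assms(1)] in simp)

lemma unif_single: "d \<in> {1,2} \<Longrightarrow> measure_pmf.prob (pmf_of_set {1::nat,2}) {d} = 1/2"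
  by (auto simp: measure_pmf_of_set)

lemma unif_mu: "j \<noteq> i \<Longrightarrow> d \<in> {1,2} \<Longrightarrow> measure_pmf.prob (P j h) {d} = 1/2"
  using unif_single[of d] unif[of j h] by simp

lemma sum12: "measure_pmf.prob (P j h) {1} + measure_pmf.prob (P j h) {2} = 1"
proof -
  have "measure_pmf.prob (P j h) ({1} \<union> {2}) = measure_pmf.prob (P j h) {1} + measure_pmf.prob (P j h) {2}"
    by (rule measure_pmf.finite_measure_Union) auto
  moreover have "measure_pmf.prob (P j h) ({1} \<union> {2}) = 1"
    using sup[of j h] by (subst measure_pmf.prob_eq_1) (auto simp: AE_measure_pmf_iff)
  ultimately show ?thesis by simp
qed

lemma prob_succ:
  assumes jA: "j \<in> pendset n s" and si: "fst (s i)"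
  shows "measure_pmf.prob (acts n P s) {a. succeeds n s a j} = (1/2) ^ (card (pendset n s) - 1)"
proof -
  define A where "A = pendset n s"
  define E where "E c = PiE_dflt {..<n} 0 (\<lambda>k. if k = j then {c} else if fst (s k) then {3 - c} else {0::nat})" for c :: nat
  define \<mu> where "\<mu> k d = measure_pmf.prob (P k (snd (s k))) {d}" for k d
  have j: "j < n" "fst (s j)" using jA by (auto simp: pendset_def)
  have Eat: "a k \<in> (if k = j then {c} else if fst (s k) then {3 - c} else {0})" if "a \<in> E c" "k < n" for a c k
    using that unfolding E_def PiE_dflt_def by blast
  have iA: "i \<in> A" using si i_lt by (auto simp: A_def pendset_def)
  have fA: "finite A" by (simp add: A_def)
  have pc: "measure_pmf.prob (acts n P s) (E c) = \<mu> j c * (\<Prod>k\<in>A-{j}. \<mu> k (3 - c))" for c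
  proof -
    have "measure_pmf.prob (acts n P s) (E c) = (\<Prod>k\<in>{..<n}. measure_pmf.prob (if fst (s k) then P k (snd (s k)) else return_pmf 0) (if k = j then {c} else if fst (s k) then {3-c} else {0}))"
      unfolding E_def acts_def by (rule measure_Pi_pmf_PiE_dflt) simp
    also have "\<dots> = (\<Prod>k\<in>A. (if k = j then \<mu> j c else \<mu> k (3 - c)))"
    proof (rule prod.mono_neutral_cong_right)
      show "A \<subseteq> {..<n}" by (auto simp: A_def pendset_def)
      show "\<forall>x\<in>{..<n} - A. measure_pmf.prob (if fst (s x) then P x (snd (s x)) else return_pmf 0) (if x = j then {c} else if fst (s x) then {3-c} else {0}) = 1"
      proof
        fix x assume that: "x \<in> {..<n} - A"
        have "\<not> fst (s x)" "x \<noteq> j" using that j by (auto simp: A_def pendset_def)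
        then show "measure_pmf.prob (if fst (s x) then P x (snd (s x)) else return_pmf 0) (if x = j then {c} else if fst (s x) then {3-c} else {0}) = 1"
          by (simp add: measure_pmf_single)
      qed
      show "measure_pmf.prob (if fst (s x) then P x (snd (s x)) else return_pmf 0) (if x = j then {c} else if fst (s x) then {3-c} else {0}) = (if x = j then \<mu> j c else \<mu> x (3 - c))"
        if "x \<in> A" for x
      proof -
        have "fst (s x)" using that by (auto simp: A_def pendset_def)
        then show ?thesis by (simp add: \<mu>_def)
      qed
    qed simp
    also have "\<dots> = (if j = j then \<mu> j c else \<mu> j (3 - c)) * (\<Prod>k\<in>A-{j}. (if k = j then \<mu> j c else \<mu> k (3 - c)))"
      by (rule prod.remove[OF fA]) (use jA in \<open>simp add: A_def\<close>)
    also have "(\<Prod>k\<in>A-{j}. (if k = j then \<mu> j c else \<mu> k (3 - c))) = (\<Prod>k\<in>A-{j}. \<mu> k (3 - c))"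
      by (rule prod.cong) auto
    finally show ?thesis by simp
  qed
  have "measure_pmf.prob (acts n P s) {a. succeeds n s a j} = measure_pmf.prob (acts n P s) (E 1 \<union> E 2)"
  proof (rule measure_pmf_cong_supp)
    fix a assume a: "a \<in> set_pmf (acts n P s)"
    have s1: "\<And>k. k<n \<Longrightarrow> fst (s k) \<Longrightarrow> a k \<in> {1,2}" using acts_supp1[OF a] .
    have s0: "\<And>k. \<not>(k<n \<and> fst (s k)) \<Longrightarrow> a k = 0" using acts_supp0[OF a] .
    show "a \<in> {a. succeeds n s a j} \<longleftrightarrow> a \<in> E 1 \<union> E 2"
    proof
      assume "a \<in> {a. succeeds n s a j}"
      then have sc: "a j \<noteq> 0" "\<And>k. k < n \<Longrightarrow> k \<noteq> j \<Longrightarrow> fst (s k) \<Longrightarrow> a k \<noteq> a j"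
        by (auto simp: succeeds_def)
      have "a \<in> E (a j)"
        unfolding E_def PiE_dflt_def
      proof (intro CollectI allI conjI impI)
        fix x assume "x \<in> {..<n}"
        then have "x < n" by simp
        show "a x \<in> (if x = j then {a j} else if fst (s x) then {3 - a j} else {0})"
        proof (cases "x = j")
          case False
          show ?thesis
          proof (cases "fst (s x)")
            case True
            then show ?thesis using s1[OF \<open>x < n\<close> True] s1[OF j] sc(2)[OF \<open>x < n\<close> False True] False by auto
          qed (use s0 False in auto)
        qed simp
      next
        fix x assume "x \<notin> {..<n}" then show "a x = 0" using s0 by auto
      qed
      then show "a \<in> E 1 \<union> E 2" using s1[OF j] by auto
    next
      assume "a \<in> E 1 \<union> E 2"
      then obtain c where c: "c \<in> {1,2}" "a \<in> E c" by auto
      then have ajc: "a j = c" using Eat[OF c(2) j(1)] by simp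
      have ak: "a k = 3 - c" if "k < n" "k \<noteq> j" "fst (s k)" for k
        using Eat[OF c(2) that(1)] that(2,3) by simp
      have "c = 1 \<or> c = 2" using c(1) by simp
      then have c3: "(3::nat) - c \<noteq> c" "c \<noteq> 0" by (elim disjE; simp)+
      show "a \<in> {a. succeeds n s a j}" unfolding succeeds_def mem_Collect_eq
      proof (intro conjI allI impI)
        show "a j \<noteq> 0" using ajc c3 by simp
        fix k assume "k < n" "k \<noteq> j" "fst (s k)"
        then show "a k \<noteq> a j" using ak[of k] ajc c3 by simp
      qed
    qed
  qed
  also have "\<dots> = measure_pmf.prob (acts n P s) (E 1) + measure_pmf.prob (acts n P s) (E 2)"
  proof (rule measure_pmf.finite_measure_Union)
    show "E 1 \<inter> E 2 = {}"
    proof safe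
      fix a assume "a \<in> E 1" "a \<in> E 2"
      from Eat[OF this(1) j(1)] Eat[OF this(2) j(1)] show "a \<in> {}" by simp
    qed
  qed auto
  also have "\<dots> = \<mu> j 1 * (\<Prod>k\<in>A-{j}. \<mu> k (3 - 1)) + \<mu> j 2 * (\<Prod>k\<in>A-{j}. \<mu> k (3 - 2))"
    by (simp only: pc)
  also have "\<mu> j 1 * (\<Prod>k\<in>A-{j}. \<mu> k (3 - 1)) + \<mu> j 2 * (\<Prod>k\<in>A-{j}. \<mu> k (3 - 2)) = (1/2) ^ (card A - 1)"
  proof (cases "j = i")
    case True
    have "(\<Prod>k\<in>A-{j}. \<mu> k d) = (1/2) ^ (card A - 1)" if "d \<in> {1,2}" for d
    proof -
      have "(\<Prod>k\<in>A-{j}. \<mu> k d) = (\<Prod>k\<in>A-{j}. 1/2)"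
        using True that by (intro prod.cong) (auto simp: \<mu>_def unif_mu)
      then show ?thesis using jA fA by (simp add: A_def card_Diff_singleton)
    qed
    then have "\<mu> j 1 * (\<Prod>k\<in>A-{j}. \<mu> k (3 - 1)) + \<mu> j 2 * (\<Prod>k\<in>A-{j}. \<mu> k (3 - 2))
       = (\<mu> j 1 + \<mu> j 2) * (1/2) ^ (card A - 1)"
      by (simp add: distrib_right)
    then show ?thesis using sum12[of j "snd (s j)"] unfolding \<mu>_def by simp
  next
    case False
    have iA': "i \<in> A - {j}" using iA False by auto
    have "(\<Prod>k\<in>A-{j}. \<mu> k d) = \<mu> i d * (1/2) ^ (card A - 2)" if "d \<in> {1,2}" for d
    proof -
      have "(\<Prod>k\<in>A-{j}. \<mu> k d) = \<mu> i d * (\<Prod>k\<in>A-{j}-{i}. \<mu> k d)"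
        using iA' fA by (subst prod.remove[of _ i]) auto
      also have "(\<Prod>k\<in>A-{j}-{i}. \<mu> k d) = (\<Prod>k\<in>A-{j}-{i}. 1/2)"
        using that by (intro prod.cong) (auto simp: \<mu>_def unif_mu)
      also have "card (A-{j}-{i}) = card A - 2"
        using iA' jA fA by (simp add: A_def card_Diff_singleton)
      ultimately show ?thesis by simp
    qed
    moreover have "\<mu> j d = 1/2" if "d \<in> {1,2}" for d
      using that False by (auto simp: \<mu>_def unif_mu)
    moreover have "card A \<ge> 2"
    proof -
      have "{i, j} \<subseteq> A" using iA jA by (auto simp: A_def)
      then have "card {i,j} \<le> card A" using fA by (rule card_mono[rotated])
      then show ?thesis using False by simp
    qed
    ultimately have "\<mu> j 1 * (\<Prod>k\<in>A-{j}. \<mu> k (3 - 1)) + \<mu> j 2 * (\<Prod>k\<in>A-{j}. \<mu> k (3 - 2))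
       = (\<mu> i 1 + \<mu> i 2) * ((1/2) * (1/2) ^ (card A - 2))"
    proof -
      assume p: "\<And>d. d \<in> {1,2} \<Longrightarrow> (\<Prod>k\<in>A-{j}. \<mu> k d) = \<mu> i d * (1/2) ^ (card A - 2)"
        and m: "\<And>d. d \<in> {1,2} \<Longrightarrow> \<mu> j d = 1/2"
      define X :: real where "X = (1/2) ^ (card A - 2)"
      have a1: "(\<Prod>k\<in>A-{j}. \<mu> k (3-1)) = \<mu> i 2 * X" using p[of 2] by (simp add: X_def)
      have a2: "(\<Prod>k\<in>A-{j}. \<mu> k (3-2)) = \<mu> i 1 * X" using p[of 1] by (simp add: X_def)
      have b1: "\<mu> j 1 = 1/2" "\<mu> j 2 = 1/2" using m by auto
      show ?thesis unfolding a1 a2 b1 X_def[symmetric] by (simp add: algebra_simps)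
    qed
    also have "(1/2::real) * (1/2) ^ (card A - 2) = (1/2) ^ (card A - 1)"
      using \<open>card A \<ge> 2\<close> by (simp add: power_Suc[symmetric] Suc_diff_Suc numeral_2_eq_2 del: power_Suc)
    finally show ?thesis using sum12[of i "snd (s i)"] unfolding \<mu>_def by simp
  qed
  finally show ?thesis by (simp add: A_def)
qed

lemma two_succ_distinct:
  assumes a: "a \<in> set_pmf (acts n P s)" and j1: "j1 \<in> pendset n s" and j2: "j2 \<in> pendset n s"
    and ne: "j1 \<noteq> j2" and s1: "succeeds n s a j1"
  shows "a j2 \<noteq> a j1"
  using s1 j2 ne unfolding succeeds_def pendset_def by auto

lemma at_most_one_succ:
  assumes a: "a \<in> set_pmf (acts n P s)" and m3: "card (pendset n s) \<ge> 3"
    and j1: "j1 \<in> pendset n s" and j2: "j2 \<in> pendset n s"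
    and s1: "succeeds n s a j1" and s2: "succeeds n s a j2"
  shows "j1 = j2"
proof (rule ccontr)
  assume ne: "j1 \<noteq> j2"
  have "card {j1, j2} = 2" using ne by simp
  then have "card (pendset n s - {j1, j2}) \<ge> 1"
    using m3 j1 j2 by (subst card_Diff_subset) auto
  then have "pendset n s - {j1, j2} \<noteq> {}" by (metis card.empty not_one_le_zero)
  then obtain k where k: "k \<in> pendset n s" "k \<noteq> j1" "k \<noteq> j2" by blast
  have r1: "a j1 \<in> {1,2}" "a j2 \<in> {1,2}" "a k \<in> {1,2}"
    using acts_supp1[OF a] j1 j2 k by (auto simp: pendset_def)
  have "a j2 \<noteq> a j1" by (rule two_succ_distinct[OF a j1 j2 ne s1])
  moreover have "a k \<noteq> a j1" by (rule two_succ_distinct[OF a j1 k(1) k(2)[symmetric] s1])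
  moreover have "a k \<noteq> a j2" by (rule two_succ_distinct[OF a j2 k(1) k(3)[symmetric] s2])
  ultimately show False using r1 by auto
qed


lemma finite_acts: "finite (set_pmf (acts n P s))"
proof -
  have "finite (PiE_dflt {..<n} 0 (set_pmf \<circ> (\<lambda>j. if fst (s j) then P j (snd (s j)) else return_pmf 0)))"
  proof (rule finite_PiE_dflt)
    fix x
    have "finite (set_pmf (P x (snd (s x))))" using sup[of x "snd (s x)"] finite_subset by blast
    then show "finite ((set_pmf \<circ> (\<lambda>j. if fst (s j) then P j (snd (s j)) else return_pmf 0)) x)"
      by simp
  qed simp
  then show ?thesis unfolding acts_def by (subst set_Pi_pmf) simp_all
qed

lemma int_acts: fixes f :: "(nat \<Rightarrow> nat) \<Rightarrow> real" shows "integrable (measure_pmf (acts n P s)) f"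
  by (rule integrable_measure_pmf_finite[OF finite_acts])

lemma step_V:
  "measure_pmf.expectation (step n P s) (V n i) = V n i s - (if fst (s i) then 1 else 0)"
proof (cases "fst (s i)")
  case False
  have "V n i (upd n s a) = 0" for a using False i_lt by (simp add: V_def fst_upd)
  then show ?thesis using False by (simp add: step_eq V_def)
next
  case True
  define A where "A = pendset n s"
  define m where "m = card A"
  have fA: "finite A" by (simp add: A_def)
  have iA: "i \<in> A" using True i_lt by (simp add: A_def pendset_def)
  have m1: "m \<ge> 1" using iA fA by (simp add: m_def Suc_le_eq card_gt_0_iff) blast
  have Vs: "V n i s = W m" using True by (simp add: V_def m_def A_def)
  have Vupd: "V n i (upd n s a) = (if succeeds n s a i then 0 else W (card {j\<in>A. \<not> succeeds n s a j}))" for a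
    using True i_lt by (simp add: V_def fst_upd pendset_upd A_def)
  have E: "measure_pmf.expectation (step n P s) (V n i) = measure_pmf.expectation (acts n P s) (\<lambda>a. V n i (upd n s a))"
    by (simp add: step_eq)
  have pA: "j < n" "fst (s j)" if "j \<in> A" for j using that by (auto simp: A_def pendset_def)
  have psucc: "measure_pmf.prob (acts n P s) {a. succeeds n s a j} = (1/2) ^ (m - 1)" if "j \<in> A" for j
    using prob_succ[of j s] that True by (simp add: A_def m_def)
  consider "m = 1" | "m = 2" | "m \<ge> 3" using m1 by linarith
  then show ?thesis
  proof cases
    case 1
    then have "card A = 1" by (simp add: m_def)
    then obtain x where "A = {x}" by (rule card_1_singletonE)
    with iA have Ai: "A = {i}" by simp
    have "V n i (upd n s a) = 0" if a: "a \<in> set_pmf (acts n P s)" for a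
    proof -
      have "succeeds n s a i"
        unfolding succeeds_def
      proof (intro conjI allI impI)
        show "a i \<noteq> 0" using acts_supp1[OF a i_lt True] by auto
        fix j' assume "j' < n" "j' \<noteq> i" "fst (s j')"
        then have "j' \<in> A" by (simp add: A_def pendset_def)
        with Ai \<open>j' \<noteq> i\<close> show "a j' \<noteq> a i" by simp
      qed
      then show ?thesis by (simp add: Vupd)
    qed
    then have "measure_pmf.expectation (acts n P s) (\<lambda>a. V n i (upd n s a)) = measure_pmf.expectation (acts n P s) (\<lambda>a. 0)"
      by (rule expectation_cong_supp)
    then show ?thesis using E Vs 1 True by (simp add: W_def)
  next
    case 2
    have "V n i (upd n s a) = 2 * (1 - (if succeeds n s a i then 1 else 0))" if a: "a \<in> set_pmf (acts n P s)" for a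
    proof (cases "succeeds n s a i")
      case False
      have "{j\<in>A. \<not> succeeds n s a j} = A"
      proof safe
        fix j assume jA: "j \<in> A" "succeeds n s a j"
        have "j \<noteq> i" using False jA by auto
        have ne: "a i \<noteq> a j" by (rule two_succ_distinct[OF a _ _ \<open>j \<noteq> i\<close> jA(2)]) (use iA jA in \<open>simp_all add: A_def\<close>)
        have "succeeds n s a i"
          unfolding succeeds_def
        proof (intro conjI allI impI)
          show "a i \<noteq> 0" using acts_supp1[OF a i_lt True] by auto
          fix j' assume j': "j' < n" "j' \<noteq> i" "fst (s j')"
          then have "j' \<in> A" by (simp add: A_def pendset_def)
          have "j' = j"
          proof (rule ccontr)
            assume "j' \<noteq> j"
            then have "card {i, j, j'} = 3" using \<open>j \<noteq> i\<close> j' by simp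
            moreover have "{i, j, j'} \<subseteq> A" using iA jA \<open>j' \<in> A\<close> by simp
            ultimately have "3 \<le> m" unfolding m_def by (metis card_mono fA)
            then show False using 2 by simp
          qed
          then show "a j' \<noteq> a i" using ne by simp
        qed
        with False show False by simp
      qed
      then show ?thesis using False 2 by (simp add: Vupd m_def W_def)
    qed (simp add: Vupd)
    then have "measure_pmf.expectation (acts n P s) (\<lambda>a. V n i (upd n s a)) =
       measure_pmf.expectation (acts n P s) (\<lambda>a. 2 * (1 - (if succeeds n s a i then 1 else 0)))"
      by (rule expectation_cong_supp)
    also have "\<dots> = 2 * (1 - measure_pmf.prob (acts n P s) {a. succeeds n s a i})"
      by (simp add: int_acts expectation_ind)
    also have "\<dots> = 1" using psucc[OF iA] 2 by simp
    finally show ?thesis using E Vs 2 True by (simp add: W_def)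
  next
    case 3
    define c where "c = W m - W (m - 1)"
    define ind where "ind j a = (if succeeds n s a j then 1 else 0 :: real)" for j a
    have "V n i (upd n s a) = W m * (1 - ind i a) - c * (\<Sum>j\<in>A-{i}. ind j a)"
      if a: "a \<in> set_pmf (acts n P s)" for a
    proof -
      define S where "S = {j\<in>A. succeeds n s a j}"
      have SA: "S \<subseteq> A" by (auto simp: S_def)
      have fS: "finite S" using SA fA finite_subset by blast
      have one: "j1 = j2" if "j1 \<in> S" "j2 \<in> S" for j1 j2
        using at_most_one_succ[OF a, of j1 j2] that 3 by (simp add: S_def A_def m_def)
      have cS: "card S \<le> 1" using one fS by (simp add: card_le_Suc0_iff_eq)
      have sumeq: "(\<Sum>j\<in>A-{i}. ind j a) = real (card (S - {i}))"
      proof -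
        have "(\<Sum>j\<in>A-{i}. ind j a) = (\<Sum>j\<in>{x\<in>A-{i}. succeeds n s a x}. 1)"
          using sum.inter_filter[of "A-{i}" "\<lambda>_. 1::real" "\<lambda>x. succeeds n s a x"] fA
          unfolding ind_def by simp
        also have "{x\<in>A-{i}. succeeds n s a x} = S - {i}" by (auto simp: S_def)
        finally show ?thesis by simp
      qed
      have cardD: "card {j\<in>A. \<not> succeeds n s a j} = m - card S"
      proof -
        have "{j\<in>A. \<not> succeeds n s a j} = A - S" by (auto simp: S_def)
        then show ?thesis using card_Diff_subset[OF fS SA] by (simp add: m_def)
      qed
      show ?thesis
      proof (cases "succeeds n s a i")
        case True
        then have "i \<in> S" using iA by (simp add: S_def)
        then have "S - {i} = {}" using one by blast
        then have "card (S - {i}) = 0" by (simp only: card.empty)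
        moreover have "ind i a = 1" using True by (simp add: ind_def)
        ultimately show ?thesis using True by (simp add: Vupd sumeq)
      next
        case False
        then have "S - {i} = S" by (auto simp: S_def)
        have L: "V n i (upd n s a) = W (m - card S)" using False by (simp add: Vupd cardD)
        have "ind i a = 0" using False by (simp add: ind_def)
        then have R: "W m * (1 - ind i a) - c * (\<Sum>j\<in>A-{i}. ind j a) = W m - c * real (card S)"
          using \<open>S - {i} = S\<close> by (simp add: sumeq)
        have "card S = 0 \<or> card S = 1" using cS by linarith
        then show ?thesis unfolding L R
        proof
          assume "card S = 0" then show "W (m - card S) = W m - c * real (card S)" by simp
        next
          assume "card S = 1" then show "W (m - card S) = W m - c * real (card S)" by (simp add: c_def)
        qed
      qed
    qed
    then have "measure_pmf.expectation (acts n P s) (\<lambda>a. V n i (upd n s a)) =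
       measure_pmf.expectation (acts n P s) (\<lambda>a. W m * (1 - ind i a) - c * (\<Sum>j\<in>A-{i}. ind j a))"
      by (rule expectation_cong_supp)
    also have "\<dots> = W m * (1 - measure_pmf.expectation (acts n P s) (ind i)) - c * (\<Sum>j\<in>A-{i}. measure_pmf.expectation (acts n P s) (ind j))"
      by (simp add: int_acts integral_sum)
    also have "\<dots> = W m * (1 - (1/2) ^ (m - 1)) - c * (\<Sum>j\<in>A-{i}. (1/2) ^ (m - 1))"
    proof -
      have Eind: "measure_pmf.expectation (acts n P s) (ind j) = (1/2) ^ (m - 1)" if "j \<in> A" for j
      proof -
        have "ind j = (\<lambda>a. if succeeds n s a j then 1 else 0)" by (rule ext) (simp add: ind_def)
        then show ?thesis using psucc[OF that] by (simp add: expectation_ind)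
      qed
      have "(\<Sum>j\<in>A-{i}. measure_pmf.expectation (acts n P s) (ind j)) = (\<Sum>j\<in>A-{i}. (1/2) ^ (m - 1))"
        by (rule sum.cong) (simp_all add: Eind)
      then show ?thesis using Eind[OF iA] by simp
    qed
    also have "\<dots> = W m - 1"
    proof -
      define x :: real where "x = 2 ^ (m - 1)"
      have x0: "x > 0" by (simp add: x_def)
      have h1: "(2::real) ^ m = 2 * x" using 3 by (simp add: x_def power_Suc[symmetric] del: power_Suc)
      have h2: "(1/2::real) ^ (m - 1) = 1 / x" by (simp add: x_def power_one_over)
      have h3: "card (A - {i}) = m - 1" using iA fA by (simp add: m_def)
      have Wm: "W m = 2 * x / m" using 3 h1 by (simp add: W_def)
      have "m - 1 \<noteq> 1" using 3 by simp
      then have Wm1: "W (m - 1) = x / (real m - 1)" using 3 by (simp add: W_def x_def of_nat_diff)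
      have m0: "real m - 1 > 0" "real m > 0" using 3 by auto
      have sm: "(\<Sum>j\<in>A-{i}. 1 / x) = (real m - 1) / x" using h3 3 by (simp add: of_nat_diff)
      have M1: "real m > 1" using 3 by simp
      show ?thesis unfolding c_def h2 Wm Wm1 sm using alg[OF x0 M1] .
    qed
    finally show ?thesis using E Vs True by simp
  qed
qed


lemma Ev_Suc:
  "measure_pmf.expectation (state_dist n P (Suc t)) (V n i) =
   measure_pmf.expectation (state_dist n P t) (V n i) - measure_pmf.prob (state_dist n P t) {s. fst (s i)}"
proof -
  have "measure_pmf.expectation (state_dist n P (Suc t)) (V n i) =
        measure_pmf.expectation (state_dist n P t) (\<lambda>s. measure_pmf.expectation (step n P s) (V n i))"
    by (simp add: expectation_bind_pmf_bounded[OF V_abs])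
  also have "\<dots> = measure_pmf.expectation (state_dist n P t) (\<lambda>s. V n i s - (if fst (s i) then 1 else 0))"
    by (simp add: step_V)
  also have "\<dots> = measure_pmf.expectation (state_dist n P t) (V n i) - measure_pmf.expectation (state_dist n P t) (\<lambda>s. if fst (s i) then 1 else 0)"
  proof (rule Bochner_Integration.integral_diff)
    show "integrable (measure_pmf (state_dist n P t)) (V n i)"
      by (rule measure_pmf.integrable_const_bound[where B="2^n"]) (auto simp: V_abs)
  qed (rule integrable_ind)
  finally show ?thesis by (simp add: expectation_ind)
qed

lemma latency_Suc:
  "latency_prob n P i (Suc t) =
   measure_pmf.prob (state_dist n P t) {s. fst (s i)} - measure_pmf.prob (state_dist n P (Suc t)) {s. fst (s i)}"
proof -
  define PD where "PD = state_dist n P t \<bind> (\<lambda>s. map_pmf (\<lambda>s'. (s, s')) (step n P s))"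
  define X :: "(gstate \<times> gstate) set" where "X = {(s, s'). fst (s i) \<and> \<not> fst (s' i)}"
  define Y1 where "Y1 = {p :: gstate \<times> gstate. fst (fst p i)}"
  define Y2 where "Y2 = {p :: gstate \<times> gstate. fst (snd p i)}"
  have m1: "map_pmf fst PD = state_dist n P t"
    unfolding PD_def by (simp add: map_bind_pmf pmf.map_comp o_def map_pmf_const bind_return_pmf')
  have m2: "map_pmf snd PD = state_dist n P (Suc t)"
    unfolding PD_def by (simp add: map_bind_pmf pmf.map_comp o_def)
  have "measure_pmf.prob PD Y1 = measure_pmf.prob PD (X \<union> Y2)"
  proof (rule measure_pmf_cong_supp)
    fix p assume "p \<in> set_pmf PD"
    then have "snd p \<in> set_pmf (step n P (fst p))" unfolding PD_def by auto
    then show "p \<in> Y1 \<longleftrightarrow> p \<in> X \<union> Y2"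
      using step_supp[of "snd p" n P "fst p" i] by (auto simp: X_def Y1_def Y2_def mem_Times_iff)
  qed
  also have "\<dots> = measure_pmf.prob PD X + measure_pmf.prob PD Y2"
    by (rule measure_pmf.finite_measure_Union) (auto simp: X_def Y2_def)
  finally have e: "measure_pmf.prob PD X = measure_pmf.prob PD Y1 - measure_pmf.prob PD Y2" by simp
  have "measure_pmf.prob PD Y1 = measure_pmf.prob (map_pmf fst PD) {s. fst (s i)}"
    by (simp add: Y1_def vimage_def)
  then have y1: "measure_pmf.prob PD Y1 = measure_pmf.prob (state_dist n P t) {s. fst (s i)}"
    unfolding m1 .
  have "measure_pmf.prob PD Y2 = measure_pmf.prob (map_pmf snd PD) {s. fst (s i)}"
    by (simp add: Y2_def vimage_def)
  then have y2: "measure_pmf.prob PD Y2 = measure_pmf.prob (state_dist n P (Suc t)) {s. fst (s i)}"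
    unfolding m2 .
  have "latency_prob n P i (Suc t) = measure_pmf.prob PD X"
    unfolding latency_prob_def PD_def X_def by simp
  then show ?thesis using e y1 y2 by simp
qed


lemma main_sums:
  assumes n2: "n \<ge> 2"
  shows "(\<lambda>t. latency_prob n P i t) sums 1"
    and "(\<lambda>t. real t * latency_prob n P i t) sums (2 ^ n / real n)"
proof -
  define q where "q t = measure_pmf.prob (state_dist n P t) {s. fst (s i)}" for t
  define Ev where "Ev t = measure_pmf.expectation (state_dist n P t) (V n i)" for t
  define d where "d t = latency_prob n P i t" for t
  define S :: real where "S = 2 ^ n / real n"
  have q0: "q 0 = 1" using i_lt by (simp add: q_def init_state_def)
  have Ev0: "Ev 0 = S"
  proof -
    have "pendset n (init_state n) = {..<n}" by (auto simp: pendset_def init_state_def)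
    then show ?thesis using i_lt n2 by (simp add: Ev_def S_def V_def W_def init_state_def)
  qed
  have EvS: "Ev (Suc t) = Ev t - q t" for t unfolding Ev_def q_def by (rule Ev_Suc)
  have qnn: "q t \<ge> 0" for t by (simp add: q_def)
  have Ev_nn: "0 \<le> Ev t" for t
    unfolding Ev_def by (rule Bochner_Integration.integral_nonneg) (simp add: V_bounds)
  have Ev_le: "Ev t \<le> 2 ^ n * q t" for t
  proof -
    have "Ev t \<le> measure_pmf.expectation (state_dist n P t) (\<lambda>s. 2 ^ n * (if fst (s i) then 1 else 0))"
      unfolding Ev_def
    proof (rule Bochner_Integration.integral_mono)
      show "integrable (measure_pmf (state_dist n P t)) (V n i)"
        by (rule measure_pmf.integrable_const_bound[where B="2^n"]) (auto simp: V_abs)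
      show "integrable (measure_pmf (state_dist n P t)) (\<lambda>s. 2 ^ n * (if fst (s i) then 1 else 0 :: real))"
        using integrable_ind by (rule integrable_mult_right)
    qed (rule V_bounds)
    also have "\<dots> = 2 ^ n * q t" by (simp add: q_def expectation_ind)
    finally show ?thesis .
  qed
  have psum: "(\<Sum>k<t. q k) = S - Ev t" for t
    by (induction t) (simp_all add: Ev0 EvS)
  have sq: "summable q"
    by (rule summableI_nonneg_bounded[where x=S]) (use qnn psum Ev_nn in auto)
  have q_lim: "q \<longlonglongrightarrow> 0" using sq by (rule summable_LIMSEQ_zero)
  have Ev_lim: "Ev \<longlonglongrightarrow> 0"
  proof (rule tendsto_sandwich[where f="\<lambda>_. 0" and h="\<lambda>t. 2 ^ n * q t"])
    show "(\<lambda>t. 2 ^ n * q t) \<longlonglongrightarrow> 0" using tendsto_mult_right_zero[OF q_lim] by simp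
  qed (use Ev_nn Ev_le in auto)
  have q_sums: "q sums S"
  proof -
    have "(\<lambda>t. S - Ev t) \<longlonglongrightarrow> S - 0" by (intro tendsto_intros Ev_lim)
    then show ?thesis unfolding sums_def psum by simp
  qed
  have d0: "d 0 = 0" by (simp add: d_def latency_prob_def)
  have dS: "d (Suc t) = q t - q (Suc t)" for t unfolding d_def q_def by (rule latency_Suc)
  have dnn: "d t \<ge> 0" for t by (simp add: d_def latency_prob_def)
  have qdec: "q (Suc t) \<le> q t" for t using dnn[of "Suc t"] dS[of t] by simp
  have "(\<lambda>t. q t - q (Suc t)) sums (q 0 - 0)" by (rule telescope_sums'[OF q_lim])
  then have "(\<lambda>t. d (Suc t)) sums 1" using q0 by (simp add: dS)
  then show "(\<lambda>t. latency_prob n P i t) sums 1" using d0 by (simp add: sums_Suc_iff d_def)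
  define f where "f t = real t * d t" for t
  have fnn: "f t \<ge> 0" for t by (simp add: f_def dnn)
  have pf: "(\<Sum>t<Suc T. f t) = (\<Sum>k<T. q k) - real T * q T" for T
  proof (induction T)
    case 0 then show ?case by (simp add: f_def)
  next
    case (Suc T)
    have "(\<Sum>t<Suc (Suc T). f t) = (\<Sum>t<Suc T. f t) + f (Suc T)" by simp
    also have "\<dots> = (\<Sum>k<T. q k) - real T * q T + real (Suc T) * (q T - q (Suc T))"
      using Suc by (simp add: f_def dS)
    also have "\<dots> = (\<Sum>k<Suc T. q k) - real (Suc T) * q (Suc T)"
      by (simp add: algebra_simps)
    finally show ?case .
  qed
  have pf_le: "(\<Sum>t<N. f t) \<le> S" for N
  proof (cases N)
    case 0 then show ?thesis using q0 psum[of 0] Ev_nn[of 0] by simp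
  next
    case (Suc T)
    have "real T * q T \<ge> 0" using qnn by simp
    then show ?thesis using Suc pf[of T] psum[of T] Ev_nn[of T] by simp
  qed
  have sf: "summable f" by (rule summableI_nonneg_bounded[where x=S]) (use fnn pf_le in auto)
  have up: "suminf f \<le> S" by (rule suminf_le_const[OF sf pf_le])
  have lowK: "(\<Sum>k<K. q k) \<le> suminf f" for K
  proof (rule LIMSEQ_le_const)
    have "(\<lambda>T. suminf f + real K * q T) \<longlonglongrightarrow> suminf f + real K * 0"
      by (intro tendsto_intros q_lim)
    then show "(\<lambda>T. suminf f + real K * q T) \<longlonglongrightarrow> suminf f" by simp
    show "\<exists>N. \<forall>T\<ge>N. (\<Sum>k<K. q k) \<le> suminf f + real K * q T"
    proof (intro exI allI impI)
      fix T assume KT: "K \<le> T"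
      have qm: "q T \<le> q k" if "k \<le> T" for k by (rule lift_Suc_antimono_le[of q, OF qdec that])
      have "(\<Sum>k<K. q k) - real K * q T = (\<Sum>k<K. q k - q T)" by (simp add: sum_subtractf)
      also have "\<dots> \<le> (\<Sum>k<T. q k - q T)"
        by (rule sum_mono2) (use KT qm in auto)
      also have "\<dots> = (\<Sum>t<Suc T. f t)" unfolding pf by (simp add: sum_subtractf)
      also have "\<dots> \<le> suminf f" by (rule sum_le_suminf[OF sf]) (simp_all add: fnn)
      finally show "(\<Sum>k<K. q k) \<le> suminf f + real K * q T" by simp
    qed
  qed
  have "S \<le> suminf f"
    by (rule LIMSEQ_le_const2[OF q_sums[unfolded sums_def]]) (use lowK in auto)
  with up have "suminf f = S" by simp
  then show "(\<lambda>t. real t * latency_prob n P i t) sums (2 ^ n / real n)"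
  proof -
    have "f = (\<lambda>t. real t * latency_prob n P i t)" by (rule ext) (simp add: f_def d_def)
    then show ?thesis using summable_sums[OF sf] \<open>suminf f = S\<close> by (simp add: S_def)
  qed
qed

end


lemma latency_nonneg: "latency_prob n P i t \<ge> 0"
  by (simp add: latency_prob_def)

theorem lemma4:
  fixes n i :: nat and g :: protocol
  assumes "n \<ge> 2" and "i < n" and "g \<in> G_f2"
  shows "expected_latency n (\<lambda>j. if j = i then g else f2) i = ennreal (2 ^ n / real n)"
proof -
  obtain hs where g: "g = g_of hs" and hs: "set hs \<subseteq> {1,2}"
    using assms(3) by (auto simp: G_f2_def)
  define P where "P = (\<lambda>j. if j = i then g else f2)"
  have sup: "set_pmf (P j h) \<subseteq> {1,2}" for j h
  proof (cases "j = i")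
    case True
    show ?thesis
    proof (cases "length h < length hs")
      case True
      then have "hs ! length h \<in> {1,2}" using hs nth_mem by blast
      with True \<open>j = i\<close> show ?thesis by (simp add: P_def g g_of_def)
    qed (simp add: P_def g g_of_def f2_def True)
  qed (simp add: P_def f2_def)
  have unif: "P j h = pmf_of_set {1,2}" if "j \<noteq> i" for j h
    using that by (simp add: P_def f2_def)
  note ms = main_sums[where P=P and i=i and n=n, OF sup unif assms(2) assms(1)]
  define d where "d t = latency_prob n P i t" for t
  have dnn: "d t \<ge> 0" for t by (simp add: d_def latency_nonneg)
  have s1: "(\<Sum>t. ennreal (d t)) = 1"
  proof -
    have "(\<Sum>t. ennreal (d t)) = ennreal (\<Sum>t. d t)"
      using ms(1) dnn by (intro suminf_ennreal2) (auto simp: d_def sums_iff)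
    also have "(\<Sum>t. d t) = 1" using ms(1) by (simp add: d_def sums_iff)
    finally show ?thesis by simp
  qed
  have s2: "(\<Sum>t. of_nat t * ennreal (d t)) = ennreal (2 ^ n / real n)"
  proof -
    have "(\<lambda>t. of_nat t * ennreal (d t)) = (\<lambda>t. ennreal (real t * d t))"
      by (rule ext) (simp add: ennreal_mult dnn ennreal_of_nat_eq_real_of_nat)
    then have "(\<Sum>t. of_nat t * ennreal (d t)) = (\<Sum>t. ennreal (real t * d t))" by simp
    also have "\<dots> = ennreal (\<Sum>t. real t * d t)"
      using ms(2) dnn by (intro suminf_ennreal2) (auto simp: d_def sums_iff)
    also have "(\<Sum>t. real t * d t) = 2 ^ n / real n" using ms(2) by (simp add: d_def sums_iff)
    finally show ?thesis .
  qed
  show ?thesis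
    unfolding P_def[symmetric] expected_latency_def
    using s1 s2 by (simp add: d_def)
qed

end
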